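(* Let $\mathcal X\subseteq[0,1]$ be a Borel set with $0,1\in\mathcal X$, fix $\mu\in(0,1)$ and let $I_\mu=[(\mu-1)^{-1},\mu^{-1}]$. For $\lambda\in I_\mu$ let $E_\lambda(x)=1+\lambda(x-\mu)$ and for $\alpha\in\mathbb R$ let $E^{\mathrm H}_\alpha(x)=e^{\alpha(x-\mu)-\alpha^2/8}$, for $x\in\mathcal X$. Then for each $\alpha\in\mathbb R$ there is $\lambda_\alpha\in I_\mu$ such that $E_{\lambda_\alpha}(x)\ge E^{\mathrm H}_\alpha(x)$ for all $x\in\mathcal X$. On the other hand, for any non-zero $\lambda\in I_\mu$ and every $\alpha\in\mathbb R$, there is at least one point $x_\alpha\in\mathcal X$ such that $E^{\mathrm H}_\alpha(x_\alpha)<E_\lambda(x_\alpha)$. *)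

theory Defs
  imports "HOL-Analysis.Analysis"
begin

definition I_mu :: "real \<Rightarrow> real set" where
  "I_mu mu = {inverse (mu - 1) .. inverse mu}"

definition E_lin :: "real \<Rightarrow> real \<Rightarrow> real \<Rightarrow> real" where
  "E_lin mu lam x = 1 + lam * (x - mu)"

definition E_hoeff :: "real \<Rightarrow> real \<Rightarrow> real \<Rightarrow> real" where
  "E_hoeff mu alpha x = exp (alpha * (x - mu) - alpha\<^sup>2 / 8)"

end

theory Submission
  imports Defs
begin

lemma hoeff_aux:
  fixes p h :: real
  assumes p0: "0 < p" and p1: "p < 1" and h0: "h \<ge> 0"
  shows "-h*p + ln (1 + p*(exp h - 1)) \<le> h\<^sup>2/8"
    and "h > 0 \<Longrightarrow> -h*p + ln (1 + p*(exp h - 1)) < h\<^sup>2/8"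
proof -
  define L where "L = (\<lambda>h::real. -h * p + ln (1 + p * (exp h - 1)))"
  define L' where "L' = (\<lambda>h::real. -p + p * exp h / (1 + p * (exp h - 1)))"
  define L'' where "L'' = (\<lambda>h::real. -(p\<^sup>2) * exp h * exp h / (1 + p * (exp h - 1))\<^sup>2 +
                              p * exp h / (1 + p * (exp h - 1)))"
  have pos: "1 + p * (exp x - 1) > 0" for x
  proof -
    have "1 + p * (exp x - 1) = (1 - p) + p * exp x" by algebra
    also have "\<dots> > 0" using p0 p1 by (intro add_pos_pos) auto
    finally show ?thesis .
  qed
  have L0: "L 0 = 0" "L' 0 = 0" by (auto simp: L_def L'_def)
  have dL: "(L has_real_derivative L' x) (at x)" for x
    using pos[of x] unfolding L_def L'_def by (auto intro!: derivative_eq_intros)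
  have dL': "(L' has_real_derivative L'' x) (at x)" for x
  proof -
    have *: "1 + p * (exp x - 1) > 0" by (rule pos)
    show ?thesis
      unfolding L'_def L''_def
      by (insert *, (rule derivative_eq_intros refl | simp)+) (auto simp: divide_simps; algebra)
  qed
  have L''u: "L'' x = 1/4 - (p * exp x / (1 + p * (exp x - 1)) - 1/2)\<^sup>2" for x
    using pos[of x] by (simp add: L''_def divide_simps power2_eq_square; algebra)
  have L''_le: "L'' x \<le> 1/4" for x unfolding L''u by simp
  have L''_lt: "L'' x < 1/4" if "p * exp x \<noteq> 1 - p" for x
  proof -
    have "p * exp x / (1 + p * (exp x - 1)) \<noteq> 1/2"
      using pos[of x] that by (auto simp: divide_simps algebra_simps)
    then show ?thesis unfolding L''u by simp
  qed
  have taylor: "\<exists>t. 0 < t \<and> t < s \<and> L s = L'' t * s\<^sup>2 / 2" if s: "s > 0" for s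
  proof -
    define Ls where "Ls = (\<lambda>n. [L, L', L''] ! n)"
    have diff: "\<forall>m t. m < 2 \<and> 0 \<le> t \<and> t \<le> s \<longrightarrow> (Ls m has_real_derivative Ls (Suc m) t) (at t)"
      using dL dL' by (auto simp: Ls_def nth_Cons split: nat.splits)
    from Taylor[of 2 Ls L 0 s 0 s, OF _ _ diff]
    obtain t where "t \<in> {0<..<s}" "L s = L'' t * s\<^sup>2 / 2"
      using s L0 by (auto simp: Ls_def lessThan_nat_numeral)
    then show ?thesis by auto
  qed
  have L'_le: "L' s \<le> s/4" if "s \<ge> 0" for s
  proof (cases "s = 0")
    case True then show ?thesis using L0 by simp
  next
    case False
    then have "s > 0" using that by simp
    from MVT2[OF this, of L' L''] dL' obtain z where "L' s - L' 0 = (s - 0) * L'' z" by blast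
    moreover have "s * L'' z \<le> s * (1/4)" using \<open>s > 0\<close> L''_le[of z] by (intro mult_left_mono) auto
    ultimately show ?thesis using L0 by simp
  qed
  have mono: "L y - y\<^sup>2/8 \<le> L x - x\<^sup>2/8" if "0 \<le> x" "x \<le> y" for x y
  proof (cases "x = y")
    case False
    then have xy: "x < y" using that by simp
    have "((\<lambda>t. L t - t\<^sup>2/8) has_real_derivative (L' t - t/4)) (at t)" for t
      using dL[of t] by (auto intro!: derivative_eq_intros)
    from MVT2[OF xy, of "\<lambda>t. L t - t\<^sup>2/8" "\<lambda>t. L' t - t/4"] this
    obtain z where z: "z > x" "(L y - y\<^sup>2/8) - (L x - x\<^sup>2/8) = (y - x) * (L' z - z/4)" by blast
    have "(y - x) * (L' z - z/4) \<le> 0"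
      using xy L'_le[of z] z(1) that by (intro mult_nonneg_nonpos) auto
    then show ?thesis using z by simp
  qed simp
  show "-h*p + ln (1 + p*(exp h - 1)) \<le> h\<^sup>2/8"
    using mono[of 0 h] h0 L0 by (simp add: L_def)
  assume hp: "h > 0"
  obtain t where t: "0 < t" "t < h" "L h = L'' t * h\<^sup>2 / 2" using taylor[OF hp] by blast
  have "L h < h\<^sup>2/8"
  proof (cases "p * exp t = 1 - p")
    case False
    have "L'' t * h\<^sup>2 / 2 < (1/4) * h\<^sup>2 / 2"
      using L''_lt[OF False] hp by (intro divide_strict_right_mono mult_strict_right_mono) auto
    then show ?thesis using t(3) by linarith
  next
    case True
    obtain t' where t': "0 < t'" "t' < t" "L t = L'' t' * t\<^sup>2 / 2" using taylor[OF t(1)] by blast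
    have "p * exp t' < p * exp t" using t' p0 by simp
    then have "p * exp t' \<noteq> 1 - p" using True by simp
    have "L'' t' * t\<^sup>2 / 2 < (1/4) * t\<^sup>2 / 2"
      using L''_lt[OF \<open>p * exp t' \<noteq> 1 - p\<close>] t by (intro divide_strict_right_mono mult_strict_right_mono) auto
    then have "L t < t\<^sup>2/8" using t'(3) by linarith
    then show ?thesis using mono[of t h] t by simp
  qed
  then show "-h*p + ln (1 + p*(exp h - 1)) < h\<^sup>2/8" by (simp add: L_def)
qed


lemma bern_pos:
  fixes p h :: real
  assumes p0: "0 < p" and p1: "p < 1" and h0: "h \<ge> 0"
  shows "(1-p)*exp(-h*p - h\<^sup>2/8) + p*exp(h*(1-p) - h\<^sup>2/8) \<le> 1"
    and "h > 0 \<Longrightarrow> (1-p)*exp(-h*p - h\<^sup>2/8) + p*exp(h*(1-p) - h\<^sup>2/8) < 1"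
proof -
  define D where "D = 1 + p*(exp h - 1)"
  have "p * exp h > 0" using p0 by simp
  then have Dpos: "D > 0" unfolding D_def using p1 by (simp add: algebra_simps)
  have eq: "(1-p)*exp(-h*p - h\<^sup>2/8) + p*exp(h*(1-p) - h\<^sup>2/8) = D / exp(h*p + h\<^sup>2/8)"
  proof -
    have "h*(1-p) - h\<^sup>2/8 = h + (-h*p - h\<^sup>2/8)" by (simp add: algebra_simps)
    then have e1: "exp(h*(1-p) - h\<^sup>2/8) = exp h * exp(-h*p - h\<^sup>2/8)"
      by (simp only: exp_add)
    have "-h*p - h\<^sup>2/8 = - (h*p + h\<^sup>2/8)" by simp
    then have e2: "exp(-h*p - h\<^sup>2/8) = inverse (exp(h*p + h\<^sup>2/8))"
      by (simp only: exp_minus)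
    show ?thesis unfolding e1 e2 D_def by (simp only: divide_inverse) algebra
  qed
  have "ln D \<le> h*p + h\<^sup>2/8" using hoeff_aux(1)[OF p0 p1 h0] unfolding D_def by simp
  then have "D \<le> exp(h*p + h\<^sup>2/8)" using Dpos by (metis exp_le_cancel_iff exp_ln)
  then show "(1-p)*exp(-h*p - h\<^sup>2/8) + p*exp(h*(1-p) - h\<^sup>2/8) \<le> 1"
    unfolding eq by simp
  assume "h > 0"
  then have "ln D < h*p + h\<^sup>2/8" using hoeff_aux(2)[OF p0 p1 h0] unfolding D_def by simp
  then have "D < exp(h*p + h\<^sup>2/8)" using Dpos by (metis exp_less_cancel_iff exp_ln)
  then show "(1-p)*exp(-h*p - h\<^sup>2/8) + p*exp(h*(1-p) - h\<^sup>2/8) < 1"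
    unfolding eq by simp
qed

lemma bern:
  fixes mu a :: real
  assumes p0: "0 < mu" and p1: "mu < 1"
  shows "(1-mu)*exp(-a*mu - a\<^sup>2/8) + mu*exp(a*(1-mu) - a\<^sup>2/8) \<le> 1"
    and "a \<noteq> 0 \<Longrightarrow> (1-mu)*exp(-a*mu - a\<^sup>2/8) + mu*exp(a*(1-mu) - a\<^sup>2/8) < 1"
proof -
  have sym: "(1-mu)*exp(-a*mu - a\<^sup>2/8) + mu*exp(a*(1-mu) - a\<^sup>2/8)
     = (1-(1-mu))*exp(-(-a)*(1-mu) - (-a)\<^sup>2/8) + (1-mu)*exp((-a)*(1-(1-mu)) - (-a)\<^sup>2/8)"
  proof -
    have "-(-a)*(1-mu) - (-a)\<^sup>2/8 = a*(1-mu) - a\<^sup>2/8" "(-a)*(1-(1-mu)) - (-a)\<^sup>2/8 = -a*mu - a\<^sup>2/8"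
      by (simp_all add: power2_eq_square)
    then show ?thesis by simp
  qed
  have q0: "0 < 1 - mu" and q1: "1 - mu < 1" using p0 p1 by auto
  show "(1-mu)*exp(-a*mu - a\<^sup>2/8) + mu*exp(a*(1-mu) - a\<^sup>2/8) \<le> 1"
  proof (cases "a \<ge> 0")
    case True then show ?thesis using bern_pos(1)[OF p0 p1 True] by simp
  next
    case False then show ?thesis unfolding sym using bern_pos(1)[OF q0 q1, of "-a"] by simp
  qed
  assume "a \<noteq> 0"
  show "(1-mu)*exp(-a*mu - a\<^sup>2/8) + mu*exp(a*(1-mu) - a\<^sup>2/8) < 1"
  proof (cases "a > 0")
    case True then show ?thesis using bern_pos(2)[OF p0 p1] by simp
  next
    case False then have "-a > 0" using \<open>a \<noteq> 0\<close> by simp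
    then show ?thesis unfolding sym using bern_pos(2)[OF q0 q1, of "-a"] by simp
  qed
qed


theorem proposition2:
  fixes X :: "real set" and mu :: real
  assumes "X \<in> sets borel"
    and "X \<subseteq> {0..1}"
    and "0 \<in> X" and "1 \<in> X"
    and "0 < mu" and "mu < 1"
  shows "(\<forall>alpha::real. \<exists>lam\<in>I_mu mu. \<forall>x\<in>X. E_lin mu lam x \<ge> E_hoeff mu alpha x)
       \<and> (\<forall>lam\<in>I_mu mu. lam \<noteq> 0 \<longrightarrow>
            (\<forall>alpha::real. \<exists>x\<in>X. E_hoeff mu alpha x < E_lin mu lam x))"
proof (intro conjI allI ballI impI)
  note mu0 = \<open>0 < mu\<close> and mu1 = \<open>mu < 1\<close>
  fix al :: real
  define a where "a = exp(-al*mu - al\<^sup>2/8)"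
  define b where "b = exp(al*(1-mu) - al\<^sup>2/8)"
  have a0: "a > 0" and b0: "b > 0" unfolding a_def b_def by auto
  have H0: "E_hoeff mu al 0 = a" unfolding E_hoeff_def a_def by simp
  have H1: "E_hoeff mu al 1 = b" unfolding E_hoeff_def b_def by simp
  have B: "(1-mu)*a + mu*b \<le> 1" unfolding a_def b_def using bern(1)[OF mu0 mu1] .
  {
    define lam where "lam = (1-a)/mu"
    have la: "1 - lam*mu = a" unfolding lam_def using mu0 by simp
    have "mu*b \<le> mu*(1 + lam*(1-mu))"
    proof -
      have "mu*(1 + lam*(1-mu)) = mu + (1-a)*(1-mu)" unfolding lam_def using mu0 by (simp add: field_simps)
      then show ?thesis using B by (simp add: algebra_simps)
    qed
    then have lb: "b \<le> 1 + lam*(1-mu)" using mu0 by simp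
    have "lam \<in> I_mu mu"
    proof -
      have "lam \<le> inverse mu" unfolding lam_def using a0 mu0 by (simp add: divide_simps)
      moreover have "inverse (mu - 1) \<le> lam"
      proof -
        have "(1-mu) * inverse (mu - 1) = -1" using mu1 by (simp add: field_simps)
        moreover have "(1-mu) * lam \<ge> -1" using lb b0 by (simp add: algebra_simps)
        ultimately have "(1-mu) * inverse (mu - 1) \<le> (1-mu) * lam" by simp
        then show ?thesis using mu1 by simp
      qed
      ultimately show ?thesis unfolding I_mu_def by simp
    qed
    moreover have "\<forall>x\<in>X. E_lin mu lam x \<ge> E_hoeff mu al x"
    proof
      fix x assume "x \<in> X"
      then have x0: "0 \<le> x" and x1: "x \<le> 1" using assms(2) by auto
      have "al*(x-mu) - al\<^sup>2/8 = (1-x) *\<^sub>R (-al*mu - al\<^sup>2/8) + x *\<^sub>R (al*(1-mu) - al\<^sup>2/8)"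
        by (simp add: field_simps)
      then have "E_hoeff mu al x = exp ((1-x) *\<^sub>R (-al*mu - al\<^sup>2/8) + x *\<^sub>R (al*(1-mu) - al\<^sup>2/8))"
        unfolding E_hoeff_def by simp
      also have "\<dots> \<le> (1-x) * a + x * b"
        unfolding a_def b_def using convex_onD[OF exp_convex, of x] x0 x1 by simp
      also have "\<dots> \<le> (1-x) * (1 - lam*mu) + x * (1 + lam*(1-mu))"
        using la lb x0 x1 by (intro add_mono mult_left_mono) auto
      also have "\<dots> = E_lin mu lam x" unfolding E_lin_def by (simp add: algebra_simps)
      finally show "E_lin mu lam x \<ge> E_hoeff mu al x" .
    qed
    ultimately show "\<exists>lam\<in>I_mu mu. \<forall>x\<in>X. E_lin mu lam x \<ge> E_hoeff mu al x" by blast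
  }
  fix lam assume "lam \<in> I_mu mu" "lam \<noteq> 0"
  have L0: "E_lin mu lam 0 = 1 - lam*mu" and L1: "E_lin mu lam 1 = 1 + lam*(1-mu)"
    unfolding E_lin_def by (simp_all add: algebra_simps)
  show "\<exists>x\<in>X. E_hoeff mu al x < E_lin mu lam x"
  proof (cases "al = 0")
    case True
    then have "a = 1" "b = 1" unfolding a_def b_def by simp_all
    show ?thesis
    proof (cases "lam > 0")
      case True
      then have "E_hoeff mu al 1 < E_lin mu lam 1" using H1 L1 \<open>b = 1\<close> mu1 by simp
      then show ?thesis using assms(4) by blast
    next
      case False
      then have "lam < 0" using \<open>lam \<noteq> 0\<close> by simp
      then have "lam * mu < 0" using mu0 by (simp add: mult_neg_pos)
      then have "E_hoeff mu al 0 < E_lin mu lam 0" using H0 L0 \<open>a = 1\<close> by simp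
      then show ?thesis using assms(3) by blast
    qed
  next
    case False
    have S: "(1-mu)*a + mu*b < 1" unfolding a_def b_def using bern(2)[OF mu0 mu1 False] .
    show ?thesis
    proof (rule ccontr)
      assume "\<not> ?thesis"
      then have "a \<ge> 1 - lam*mu" "b \<ge> 1 + lam*(1-mu)"
        using assms(3,4) H0 H1 L0 L1 by (metis not_less)+
      then have "(1-mu)*a + mu*b \<ge> (1-mu)*(1 - lam*mu) + mu*(1 + lam*(1-mu))"
        using mu0 mu1 by (intro add_mono mult_left_mono) auto
      moreover have "(1-mu)*(1 - lam*mu) + mu*(1 + lam*(1-mu)) = 1" by (simp add: algebra_simps)
      ultimately show False using S by simp
    qed
  qed
qed

end
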